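(* There is an absolute constant $C$ such that the following holds. Let $n\ge 4$ be a power of $4$ and let $\mathcal{H}_1$ be as in the context. Let $1\le i<j\le n$, let $i$ lie in block $c_1$ and $j$ in block $c_2$ (possibly $c_1=c_2$), and let $r=\min(c_2-c_1,\ \sqrt{n}-(c_2-c_1))$. Then \[\sum_{d=0}^{\sqrt{n}-1}\mathbb{E}_{h\in\mathcal{H}_1}\left[h_{i+d\sqrt{n}}\,h_{j+d\sqrt{n}}\right]\ \le\ C\,\frac{\lg(r+2)}{(r+1)^2}.\]
   Context: $\lg$ is the base-2 logarithm. Let $n$ be a power of $4$, so $\sqrt{n}$ is an even integer; put $\ell=\sqrt{n}/2$. For $1\le c\le\sqrt n$, the $c$-th block is $\{(c-1)\sqrt n+1,\dots,c\sqrt n\}\subseteq[n]$. The random function $h:[n]\to\{-1,1\}$ drawn from $\mathcal{H}_1$ has mutually independent coordinates, with $\mathbb{P}[h_i=1]=\tfrac12+\tfrac{1}{2(\ell+1-c)}$ if $i$ lies in block $c\le \ell$, and $\mathbb{P}[h_i=1]=\tfrac12-\tfrac{1}{2(c-\ell)}$ if $i$ lies in block $c\ge \ell+1$ (so $\mathbb{E}h_i=\frac{1}{\ell+1-c}$, resp. $-\frac{1}{c-\ell}$). Indices are taken modulo $n$: $h_{i+n}=h_i$ for all integers $i$. *)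

theory Defs
  imports "HOL-Probability.Probability"
begin

(* sqrt n as a natural number (n is a power of 4, so this is exact) *)
definition isqrt :: "nat \<Rightarrow> nat" where
  "isqrt n = nat \<lfloor>sqrt (real n)\<rfloor>"

definition blk :: "nat \<Rightarrow> nat \<Rightarrow> nat" where
  "blk n i = (i - 1) div isqrt n + 1"

(* P[h_i = 1] for the distribution H_1 *)
definition prob_one :: "nat \<Rightarrow> nat \<Rightarrow> real" where
  "prob_one n i = (let l = real (isqrt n) / 2; c = real (blk n i) in
     if c \<le> l then 1/2 + 1 / (2 * (l + 1 - c)) else 1/2 - 1 / (2 * (c - l)))"

definition pm_one_pmf :: "real \<Rightarrow> real pmf" where
  "pm_one_pmf p = map_pmf (\<lambda>b. if b then 1 else -1) (bernoulli_pmf p)"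

(* H_1: independent coordinates on [n] = {1..n}; outside [n] the value is irrelevant (fixed to 0) *)
definition H1 :: "nat \<Rightarrow> (nat \<Rightarrow> real) pmf" where
  "H1 n = Pi_pmf {1..n} 0 (\<lambda>i. pm_one_pmf (prob_one n i))"

definition wrap :: "nat \<Rightarrow> nat \<Rightarrow> nat" where
  "wrap n k = (k - 1) mod n + 1"

end

theory Submission
  imports Defs "HOL-Analysis.Harmonic_Numbers"
begin

lemma set_pm_one: "set_pmf (pm_one_pmf q) \<subseteq> {1, -1}"
  unfolding pm_one_pmf_def by auto
lemma exp_pm_one: "0 \<le> q \<Longrightarrow> q \<le> 1 \<Longrightarrow> measure_pmf.expectation (pm_one_pmf q) (\<lambda>v. v) = 2*q - 1"
  unfolding pm_one_pmf_def by simp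
lemma exp_pm_one1: "0 \<le> q \<Longrightarrow> q \<le> 1 \<Longrightarrow> measure_pmf.expectation (pm_one_pmf q) (\<lambda>v. v + 1) = 2*q"
  unfolding pm_one_pmf_def by simp
lemma fin_Pi: "finite A \<Longrightarrow> finite (set_pmf (Pi_pmf A 0 (\<lambda>z. pm_one_pmf (p z))))"
  apply (subst set_Pi_pmf, assumption)
  apply (rule finite_PiE_dflt, assumption)
  using set_pm_one finite_subset by fastforce

lemma exp_single:
  assumes "finite A" "x \<in> A" "0 \<le> p x" "p x \<le> 1"
  shows "measure_pmf.expectation (Pi_pmf A 0 (\<lambda>z. pm_one_pmf (p z))) (\<lambda>h. h x) = 2 * p x - 1"
proof -
  have "measure_pmf.expectation (Pi_pmf A 0 (\<lambda>z. pm_one_pmf (p z))) (\<lambda>h. h x)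
     = measure_pmf.expectation (map_pmf (\<lambda>h. h x) (Pi_pmf A 0 (\<lambda>z. pm_one_pmf (p z)))) (\<lambda>v. v)"
    by simp
  also have "\<dots> = measure_pmf.expectation (pm_one_pmf (p x)) (\<lambda>v. v)"
    using assms by (subst Pi_pmf_component) auto
  finally show ?thesis using exp_pm_one assms by simp
qed

lemma exp_pair:
  assumes "finite A" "x \<in> A" "y \<in> A" "x \<noteq> y" "\<And>z. 0 \<le> p z \<and> p z \<le> 1"
  shows "measure_pmf.expectation (Pi_pmf A 0 (\<lambda>z. pm_one_pmf (p z))) (\<lambda>h. h x * h y)
       = (2 * p x - 1) * (2 * p y - 1)"
proof -
  let ?Q = "Pi_pmf A 0 (\<lambda>z. pm_one_pmf (p z))"
  define f where "f z v = (if z = x \<or> z = y then v + 1 else (1::real))" for z v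
  have int: "integrable (measure_pmf ?Q) g" for g :: "_ \<Rightarrow> real"
    by (rule integrable_measure_pmf_finite) (rule fin_Pi[OF assms(1)])
  have prodeq: "(\<Prod>z\<in>A. f z (h z)) = (h x + 1) * (h y + 1)" for h
  proof -
    have "(\<Prod>z\<in>A. f z (h z)) = (\<Prod>z\<in>{x,y}. f z (h z))"
      using assms by (intro prod.mono_neutral_right) (auto simp: f_def)
    then show ?thesis using assms by (simp add: f_def)
  qed
  have "measure_pmf.expectation ?Q (\<lambda>h. \<Prod>z\<in>A. f z (h z))
       = (\<Prod>z\<in>A. measure_pmf.expectation (pm_one_pmf (p z)) (f z))"
  proof (rule expectation_prod_Pi_pmf[OF assms(1)])
    fix z assume "z \<in> A"
    show "integrable (measure_pmf (pm_one_pmf (p z))) (f z)"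
      by (rule integrable_measure_pmf_finite) (meson finite.emptyI finite.insertI finite_subset set_pm_one)
  next
    fix z v assume "z \<in> A" "v \<in> set_pmf (pm_one_pmf (p z))"
    then show "0 \<le> f z v" using set_pm_one[of "p z"] by (auto simp: f_def)
  qed
  also have "\<dots> = (\<Prod>z\<in>{x,y}. measure_pmf.expectation (pm_one_pmf (p z)) (f z))"
  proof (rule prod.mono_neutral_right, goal_cases)
    case 3 show ?case proof
    fix i assume "i \<in> A - {x,y}"
    then have "f i = (\<lambda>_. 1)" by (auto simp: f_def fun_eq_iff)
    then show "measure_pmf.expectation (pm_one_pmf (p i)) (f i) = 1" by simp
  qed
  qed (use assms in auto)
  also have "\<dots> = (2 * p x) * (2 * p y)"
  proof -
    have "f x = (\<lambda>v. v + 1)" "f y = (\<lambda>v. v + 1)" by (auto simp: f_def fun_eq_iff)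
    then show ?thesis using assms(5)[of x] assms(5)[of y] exp_pm_one1[of "p x"] exp_pm_one1[of "p y"] assms(4) by simp
  qed
  finally have E1: "measure_pmf.expectation ?Q (\<lambda>h. (h x + 1) * (h y + 1)) = (2 * p x) * (2 * p y)"
    by (simp add: prodeq)
  have ex: "measure_pmf.expectation ?Q (\<lambda>h. h x) = 2 * p x - 1"
    using exp_single[OF assms(1,2)] assms(5)[of x] by auto
  have ey: "measure_pmf.expectation ?Q (\<lambda>h. h y) = 2 * p y - 1"
    using exp_single[OF assms(1,3)] assms(5)[of y] by auto
  have eq: "(\<lambda>h::_\<Rightarrow>real. h x * h y) = (\<lambda>h. (h x + 1) * (h y + 1) - h x - h y - 1)"
    by (rule ext) (simp add: algebra_simps)
  have "measure_pmf.expectation ?Q (\<lambda>h. (h x + 1) * (h y + 1) - h x - h y - 1)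
     = measure_pmf.expectation ?Q (\<lambda>h. (h x + 1) * (h y + 1)) - measure_pmf.expectation ?Q (\<lambda>h. h x)
        - measure_pmf.expectation ?Q (\<lambda>h. h y) - 1"
    apply (subst Bochner_Integration.integral_diff, rule int, rule int)+
    apply simp
    done
  then show ?thesis unfolding eq using E1 ex ey by (simp add: algebra_simps)
qed



definition mu :: "nat \<Rightarrow> nat \<Rightarrow> real" where
  "mu l c = (if c \<le> l then 1 / real (l + 1 - c) else - 1 / real (c - l))"

definition gg :: "nat \<Rightarrow> nat \<Rightarrow> real" where
  "gg l a = mu l (a mod (2*l) + 1)"

definition PP :: "nat \<Rightarrow> nat \<Rightarrow> real" where
  "PP d N = (\<Sum>j<N. 1 / ((real j + 1) * (real j + 1 + real d)))"

lemma PP_eq: "real d * PP d N = harm N + harm d - harm (N + d)"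
proof (induction N)
  case 0 then show ?case by (simp add: PP_def harm_def)
next
  case (Suc N)
  have "real d * PP d (Suc N) = real d * PP d N + real d / ((real N + 1) * (real N + 1 + real d))"
    by (simp add: PP_def algebra_simps)
  also have "real d / ((real N + 1) * (real N + 1 + real d)) = 1 / (real N + 1) - 1 / (real N + 1 + real d)"
    by (simp add: field_simps)
  finally show ?case using Suc by (simp add: harm_Suc inverse_eq_divide algebra_simps)
qed

lemma PP_le: "d \<ge> 1 \<Longrightarrow> PP d N \<le> harm d / real d"
proof -
  assume d: "d \<ge> 1"
  have "harm N \<le> (harm (N + d) :: real)" by (rule harm_mono) simp
  then have "real d * PP d N \<le> harm d" using PP_eq[of d N] by simp
  then show ?thesis using d by (simp add: field_simps)
qed

lemma QQ_eq: "(\<Sum>i<d. 1 / ((real i + 1) * (real d - real i))) = 2 * harm d / (real d + 1)"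
proof -
  have "(\<Sum>i<d. 1 / ((real i + 1) * (real d - real i)))
      = (\<Sum>i<d. (1 / (real d + 1)) * (1 / (real i + 1) + 1 / (real d - real i)))"
    by (intro sum.cong refl) (auto simp: field_simps)
  also have "\<dots> = (1 / (real d + 1)) * ((\<Sum>i<d. 1 / (real i + 1)) + (\<Sum>i<d. 1 / (real d - real i)))"
    by (simp only: sum_distrib_left[symmetric] sum.distrib)
  also have "(\<Sum>i<d. 1 / (real d - real i)) = (\<Sum>i<d. 1 / (real i + 1))"
  proof -
    have "(\<Sum>i<d. 1 / (real d - real i)) = (\<Sum>i<d. (\<lambda>j. 1 / (real j + 1)) (d - Suc i))"
      by (intro sum.cong refl) (auto simp: of_nat_diff)
    also have "\<dots> = (\<Sum>i<d. 1 / (real i + 1))" by (rule sum.nat_diff_reindex)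
    finally show ?thesis .
  qed
  also have "(\<Sum>i<d. 1 / (real i + 1)) = harm d"
    by (simp add: harm_altdef inverse_eq_divide add.commute)
  finally show ?thesis by simp
qed



lemma g_lo: "a < l \<Longrightarrow> gg l a = 1 / (real l - real a)"
  by (simp add: gg_def mu_def of_nat_diff)

lemma g_hi: "l \<le> a \<Longrightarrow> a < 2*l \<Longrightarrow> gg l a = - 1 / (real a + 1 - real l)"
  by (simp add: gg_def mu_def of_nat_diff)

lemma g_per: "gg l (a + 2*l) = gg l a"
  by (simp add: gg_def)

lemma T_le:
  assumes "d \<le> l"
  shows "(\<Sum>a<2*l. gg l a * gg l (a + d)) \<le> 2 * PP d (l - d) - 2 * harm d / (real d + 1)"
proof -
  define F where "F a = gg l a * gg l (a + d)" for a
  have split: "(\<Sum>a<2*l. F a) = sum F {0..<l-d} + sum F {l-d..<l} + sum F {l..<2*l-d} + sum F {2*l-d..<2*l}"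
    using assms by (simp add: sum.atLeastLessThan_concat atLeast0LessThan[symmetric])
  have p1: "sum F {0..<l-d} = PP d (l - d)"
  proof -
    have "sum F {0..<l-d} = (\<Sum>i\<in>{0..<l-d}. F (l - d + 0 - Suc i))"
      by (rule sum.atLeastLessThan_rev)
    also have "\<dots> = PP d (l - d)"
      unfolding PP_def atLeast0LessThan
      by (intro sum.cong refl) (auto simp: F_def g_lo of_nat_diff field_simps)
    finally show ?thesis .
  qed
  have p3: "sum F {l..<2*l-d} = PP d (l - d)"
  proof -
    have "sum F {l..<2*l-d} = sum F {0+l..<(l-d)+l}" using assms by (simp add: mult_2)
    also have "\<dots> = (\<Sum>i\<in>{0..<l-d}. F (i + l))" by (rule sum.shift_bounds_nat_ivl)
    also have "\<dots> = PP d (l - d)"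
      unfolding PP_def atLeast0LessThan
      by (intro sum.cong refl) (auto simp: F_def g_hi of_nat_diff field_simps)
    finally show ?thesis .
  qed
  have p2: "sum F {l-d..<l} = - (2 * harm d / (real d + 1))"
  proof -
    have "sum F {l-d..<l} = sum F {0+(l-d)..<d+(l-d)}" using assms by simp
    also have "\<dots> = (\<Sum>i\<in>{0..<d}. F (i + (l - d)))" by (rule sum.shift_bounds_nat_ivl)
    also have "\<dots> = (\<Sum>i<d. - (1 / ((real i + 1) * (real d - real i))))"
      unfolding atLeast0LessThan
      using assms by (intro sum.cong refl) (auto simp: F_def g_lo g_hi of_nat_diff field_simps)
    also have "\<dots> = - (2 * harm d / (real d + 1))"
      by (simp add: sum_negf QQ_eq)
    finally show ?thesis .
  qed
  have p4: "sum F {2*l-d..<2*l} \<le> 0"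
  proof (rule sum_nonpos)
    fix a assume a: "a \<in> {2*l-d..<2*l}"
    have la: "l \<le> a" "a < 2*l" using a assms by auto
    have "gg l a \<le> 0" using la by (simp add: g_hi[OF la])
    moreover have "gg l (a + d) \<ge> 0"
    proof -
      have e: "a + d - 2*l + 2*l = a + d" using a assms by auto
      have "gg l (a + d) = gg l ((a + d - 2*l) + 2*l)" by (simp only: e)
      also have "\<dots> = gg l (a + d - 2*l)" by (rule g_per)
      also have "\<dots> = 1 / (real l - real (a + d - 2*l))" using a assms by (intro g_lo) auto
      moreover have "a + d - 2*l < l" using a assms by auto
      ultimately show ?thesis by simp
    qed
    ultimately show "F a \<le> 0" by (simp add: F_def mult_nonpos_nonneg)
  qed
  show ?thesis using split p1 p2 p3 p4 by (simp add: F_def)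
qed



lemma harm_log: "harm d \<le> 2 * log 2 (real d + 2)"
proof (cases "d = 0")
  case True
  then show ?thesis by (simp add: harm_def)
next
  case False
  have "harm d - ln (real d) \<le> harm 1 - ln (real (1::nat))"
    using False by (intro euler_mascheroni_sequence_decreasing) auto
  then have h: "harm d \<le> 1 + ln (real d)" by (simp add: harm_def)
  have "ln (real d) \<le> ln (real d + 2)" using False by simp
  also have "\<dots> \<le> log 2 (real d + 2)"
  proof -
    have "ln 2 \<le> (1::real)" using ln_le_minus_one[of 2] by simp
    moreover have "0 \<le> ln (real d + 2)" by simp
    moreover have "0 < ln (2::real)" by simp
    ultimately show ?thesis unfolding log_def by (simp add: field_simps mult_left_le)
  qed
  finally have a: "ln (real d) \<le> log 2 (real d + 2)" .
  have o: "1 \<le> log 2 (real d + 2)" by simp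
  show ?thesis using h a o by linarith
qed

lemma T_bound:
  assumes "d \<le> l"
  shows "(\<Sum>a<2*l. gg l a * gg l (a + d)) \<le> 8 * log 2 (real d + 2) / (real d + 1)^2"
proof (cases "d = 0")
  case True
  have "PP 0 l \<le> 2 * PP 1 l"
    unfolding PP_def sum_distrib_left
  proof (intro sum_mono)
    fix j assume "j \<in> {..<l}"
    have "(real j + 1) * (real j + 1 + real (1::nat)) \<le> 2 * ((real j + 1) * (real j + 1 + real (0::nat)))"
      by (simp add: algebra_simps)
    then show "1 / ((real j + 1) * (real j + 1 + real (0::nat))) \<le> 2 * (1 / ((real j + 1) * (real j + 1 + real (1::nat))))"
      by (simp add: divide_simps)
  qed
  also have "\<dots> \<le> 2 * (harm 1 / real (1::nat))" using PP_le[of 1 l] by simp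
  finally have "PP 0 l \<le> 2" by (simp add: harm_def)
  then show ?thesis using T_le[OF assms] True by (simp add: harm_def)
next
  case False
  have T: "(\<Sum>a<2*l. gg l a * gg l (a + d)) \<le> 2 * harm d / real d - 2 * harm d / (real d + 1)"
    using T_le[OF assms] PP_le[of d "l - d"] False by simp
  have "2 * harm d / real d - 2 * harm d / (real d + 1) = 2 * harm d / (real d * (real d + 1))"
    using False by (simp add: field_simps)
  also have "\<dots> \<le> 4 * harm d / (real d + 1)^2"
  proof -
    have hp: "0 \<le> (harm d :: real)" by (rule harm_nonneg)
    have "real d + 1 \<le> 2 * real d" using False by simp
    then have "(real d + 1) * (real d + 1) \<le> (2 * real d) * (real d + 1)"
      by (intro mult_right_mono) auto
    then have "2 * (real d + 1)^2 \<le> 4 * (real d * (real d + 1))"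
      by (simp add: power2_eq_square algebra_simps)
    then show ?thesis using False hp
      by (simp add: divide_simps mult_left_mono)
  qed
  also have "\<dots> \<le> 8 * log 2 (real d + 2) / (real d + 1)^2"
    using harm_log[of d] by (simp add: divide_right_mono)
  finally show ?thesis using T by simp
qed

lemma shift_sum:
  fixes s c :: nat
  assumes "\<And>a. F (a + s) = (F a :: real)"
  shows "(\<Sum>i<s. F (c + i)) = (\<Sum>i<s. F i)"
proof (induction c)
  case 0 then show ?case by simp
next
  case (Suc c)
  show ?case
  proof (cases s)
    case 0 then show ?thesis by simp
  next
    case (Suc m)
    have "(\<Sum>i<s. F (c + i)) = F c + (\<Sum>i<m. F (Suc c + i))"
      unfolding Suc by (subst sum.lessThan_Suc_shift) simp
    moreover have "(\<Sum>i<s. F (Suc c + i)) = (\<Sum>i<m. F (Suc c + i)) + F (c + s)"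
      unfolding Suc by (simp add: add.commute add.left_commute)
    moreover have "F (c + s) = F c" using assms by simp
    ultimately show ?thesis using Suc.IH by simp
  qed
qed

lemma T_sym:
  assumes "d \<le> 2*l"
  shows "(\<Sum>a<2*l. gg l a * gg l (a + d)) = (\<Sum>a<2*l. gg l a * gg l (a + (2*l - d)))"
proof -
  define G where "G a = gg l a * gg l (a + (2*l - d))" for a
  have per: "G (a + 2*l) = G a" for a
    unfolding G_def using g_per[of l a] g_per[of l "a + (2*l-d)"] by (simp add: add_ac)
  have "(\<Sum>a<2*l. G a) = (\<Sum>a<2*l. G (d + a))" using shift_sum[of G "2*l" d] per by simp
  also have "\<dots> = (\<Sum>a<2*l. gg l a * gg l (a + d))"
  proof (intro sum.cong refl)
    fix a
    have "d + a + (2*l - d) = a + 2*l" using assms by simp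
    then show "G (d + a) = gg l a * gg l (a + d)" unfolding G_def by (simp add: g_per add.commute)
  qed
  finally show ?thesis by (simp add: G_def)
qed



lemma isqrt4: "isqrt (4^k) = 2^k"
proof -
  have "((2::real)^k)^2 = (2*2)^k" by (simp only: power2_eq_square power_mult_distrib)
  then have "real (4^k) = (2^k)^2" by simp
  then have "sqrt (real (4^k)) = 2^k" by simp
  then show ?thesis unfolding isqrt_def by simp
qed

lemma aux1: "(t::real) \<ge> 1 \<Longrightarrow> 0 \<le> 1/2 + 1/(2*t) \<and> 1/2 + 1/(2*t) \<le> 1 \<and> 2*(1/2 + 1/(2*t)) - 1 = 1/t"
  by (auto simp: field_simps)

lemma aux2: "(t::real) \<ge> 1 \<Longrightarrow> 0 \<le> 1/2 - 1/(2*t) \<and> 1/2 - 1/(2*t) \<le> 1 \<and> 2*(1/2 - 1/(2*t)) - 1 = -1/t"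
  by (auto simp: field_simps)

lemma prob_facts:
  assumes "isqrt n = 2*l"
  shows "0 \<le> prob_one n z \<and> prob_one n z \<le> 1 \<and> 2 * prob_one n z - 1 = mu l (blk n z)"
proof -
  have b: "blk n z \<ge> 1" by (simp add: blk_def)
  have l: "real (isqrt n) / 2 = real l" using assms by simp
  show ?thesis
  proof (cases "blk n z \<le> l")
    case True
    then have "real (blk n z) \<le> real l" by simp
    then have p: "prob_one n z = 1/2 + 1 / (2 * (real l + 1 - real (blk n z)))"
      unfolding prob_one_def l Let_def by simp
    have ge: "real l + 1 - real (blk n z) \<ge> 1" using True by simp
    have "mu l (blk n z) = 1 / (real l + 1 - real (blk n z))"
      using True by (simp add: mu_def of_nat_diff)
    with p aux1[OF ge] show ?thesis by simp
  next
    case False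
    then have "\<not> real (blk n z) \<le> real l" by simp
    then have p: "prob_one n z = 1/2 - 1 / (2 * (real (blk n z) - real l))"
      unfolding prob_one_def l Let_def by simp
    have ge: "real (blk n z) - real l \<ge> 1" using False by simp
    have "mu l (blk n z) = - 1 / (real (blk n z) - real l)"
      using False by (simp add: mu_def of_nat_diff)
    with p aux2[OF ge] show ?thesis by simp
  qed
qed

lemma wrap_facts:
  assumes "n = s * s" "s > 0" "1 \<le> i" "i \<le> n" "isqrt n = s"
  shows "wrap n (i + d * s) \<in> {1..n}"
    and "blk n (wrap n (i + d * s)) = ((i - 1) div s + d) mod s + 1"
proof -
  have n0: "n > 0" using assms by simp
  have w: "wrap n (i + d * s) = (i - 1 + d * s) mod n + 1"
    unfolding wrap_def using assms by (simp add: algebra_simps)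
  show "wrap n (i + d * s) \<in> {1..n}" unfolding w using n0
    by (simp add: Suc_le_eq)
  have "(i - 1 + d * s) mod n = s * ((i - 1 + d * s) div s mod s) + (i - 1 + d * s) mod s"
    unfolding assms(1) by (rule mod_mult2_eq)
  then have "(i - 1 + d * s) mod n div s = (i - 1 + d * s) div s mod s"
    using assms(2) by simp
  also have "(i - 1 + d * s) div s = (i - 1) div s + d" using assms(2) by simp
  finally show "blk n (wrap n (i + d * s)) = ((i - 1) div s + d) mod s + 1"
    unfolding blk_def w assms(5) by simp
qed

lemma wrap_distinct:
  assumes "1 \<le> i" "i < j" "j \<le> n"
  shows "wrap n (i + e) \<noteq> wrap n (j + e)"
proof
  assume "wrap n (i + e) = wrap n (j + e)"
  then have "(j + e - 1) mod n = (i + e - 1) mod n" unfolding wrap_def by simp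
  then have "n dvd (j + e - 1) - (i + e - 1)" using assms by (subst (asm) mod_eq_dvd_iff_nat) auto
  moreover have "(j + e - 1) - (i + e - 1) = j - i" using assms by simp
  ultimately have "n dvd j - i" by simp
  moreover have "0 < j - i" "j - i < n" using assms by auto
  ultimately show False using nat_dvd_not_less by blast
qed



lemma T_final:
  assumes "d \<le> 2*l"
  shows "(\<Sum>a<2*l. gg l a * gg l (a + d)) \<le> 8 * log 2 (real (min d (2*l - d)) + 2) / (real (min d (2*l - d)) + 1)^2"
proof (cases "d \<le> l")
  case True
  then have "min d (2*l - d) = d" by simp
  then show ?thesis using T_bound[OF True] by simp
next
  case False
  then have m: "min d (2*l - d) = 2*l - d" by simp
  have "2*l - d \<le> l" using False by simp
  from T_bound[OF this] T_sym[OF assms] m show ?thesis by simp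
qed

theorem lemma2p1:
  "\<exists>C::real. \<forall>n k i j. n = 4 ^ k \<longrightarrow> k \<ge> 1 \<longrightarrow> 1 \<le> i \<longrightarrow> i < j \<longrightarrow> j \<le> n \<longrightarrow>
     (let s = isqrt n; c1 = blk n i; c2 = blk n j; r = min (c2 - c1) (s - (c2 - c1)) in
      (\<Sum>d = 0..s - 1. measure_pmf.expectation (H1 n)
          (\<lambda>h. h (wrap n (i + d * s)) * h (wrap n (j + d * s))))
        \<le> C * log 2 (real r + 2) / (real r + 1) ^ 2)"
proof (intro exI[of _ 8] allI impI)
  fix n k i j :: nat
  assume n: "n = 4^k" and k: "k \<ge> 1" and i: "1 \<le> i" and ij: "i < j" and jn: "j \<le> n"
  define s where "s = (2::nat)^k"
  define l where "l = (2::nat)^(k-1)"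
  have s2l: "s = 2*l" unfolding s_def l_def using k by (cases k) auto
  have sq: "isqrt n = s" by (simp add: n s_def isqrt4)
  have ns: "n = s * s" unfolding n s_def by (simp add: power_mult_distrib[symmetric])
  have l1: "l \<ge> 1" by (simp add: l_def)
  have s0: "s > 0" using s2l l1 by simp
  define c1 where "c1 = (i - 1) div s"
  define c2 where "c2 = (j - 1) div s"
  have b1: "blk n i = c1 + 1" by (simp add: blk_def sq c1_def)
  have b2: "blk n j = c2 + 1" by (simp add: blk_def sq c2_def)
  have c12: "c1 \<le> c2" unfolding c1_def c2_def using ij by (intro div_le_mono) simp
  have c2s: "c2 < s" unfolding c2_def using jn i ij ns s0
    by (simp add: less_mult_imp_div_less)
  define e where "e = c2 - c1"
  have c2e: "c2 = c1 + e" using c12 e_def by simp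
  have es: "e \<le> 2*l" using c2s s2l e_def by simp
  have prob: "\<And>z. 0 \<le> prob_one n z \<and> prob_one n z \<le> 1 \<and> 2 * prob_one n z - 1 = mu l (blk n z)"
    using prob_facts sq s2l by blast
  have termeq: "measure_pmf.expectation (H1 n) (\<lambda>h. h (wrap n (i + d * s)) * h (wrap n (j + d * s)))
      = gg l (c1 + d) * gg l (c1 + d + e)" for d
  proof -
    have xi: "wrap n (i + d * s) \<in> {1..n}" using wrap_facts(1)[OF ns s0 i _ sq] ij jn by simp
    have xj: "wrap n (j + d * s) \<in> {1..n}" using wrap_facts(1)[OF ns s0 _ jn sq] ij i by simp
    have bi: "blk n (wrap n (i + d * s)) = (c1 + d) mod s + 1"
      using wrap_facts(2)[OF ns s0 i _ sq] ij jn c1_def by simp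
    have bj: "blk n (wrap n (j + d * s)) = (c2 + d) mod s + 1"
      using wrap_facts(2)[OF ns s0 _ jn sq] ij i c2_def by simp
    have ne: "wrap n (i + d * s) \<noteq> wrap n (j + d * s)" using wrap_distinct i ij jn by blast
    have "measure_pmf.expectation (H1 n) (\<lambda>h. h (wrap n (i + d * s)) * h (wrap n (j + d * s)))
       = (2 * prob_one n (wrap n (i + d * s)) - 1) * (2 * prob_one n (wrap n (j + d * s)) - 1)"
      unfolding H1_def by (rule exp_pair) (use xi xj ne prob in auto)
    also have "\<dots> = gg l (c1 + d) * gg l (c1 + d + e)"
      using prob bi bj c2e s2l by (simp add: gg_def add_ac)
    finally show ?thesis .
  qed
  define F where "F a = gg l a * gg l (a + e)" for a
  have per: "F (a + s) = F a" for a
    unfolding F_def s2l using g_per[of l a] g_per[of l "a + e"] by (simp add: add_ac)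
  have "(\<Sum>d = 0..s - 1. measure_pmf.expectation (H1 n)
          (\<lambda>h. h (wrap n (i + d * s)) * h (wrap n (j + d * s)))) = (\<Sum>d<s. F (c1 + d))"
  proof -
    have "{0..s-1} = {..<s}" using s0 by auto
    then show ?thesis by (simp add: termeq F_def add_ac)
  qed
  also have "\<dots> = (\<Sum>d<s. F d)" by (rule shift_sum) (rule per)
  also have "\<dots> \<le> 8 * log 2 (real (min e (2*l - e)) + 2) / (real (min e (2*l - e)) + 1)^2"
    unfolding F_def s2l by (rule T_final[OF es])
  finally show "let s = isqrt n; c1 = blk n i; c2 = blk n j; r = min (c2 - c1) (s - (c2 - c1)) in
      (\<Sum>d = 0..s - 1. measure_pmf.expectation (H1 n)
          (\<lambda>h. h (wrap n (i + d * s)) * h (wrap n (j + d * s))))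
        \<le> 8 * log 2 (real r + 2) / (real r + 1) ^ 2"
    unfolding Let_def sq b1 b2 s2l by (simp add: e_def)
qed


end
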